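(* Let $\delta>0$. Let $(x^\star,u^\star)\in\mathbb{R}^n\times\mathbb{R}^m$ satisfy $f(x^\star)+g(x^\star)u^\star=0$, and write $g^\star:=g(x^\star)$. Then: (a) $x^\star$ is an equilibrium of the midpoint-discretized model with input $u^\star$, i.e. the constant sequences $x_k\equiv x^\star$, $u_k\equiv u^\star$ satisfy $x_{k+1}=x_k+\delta f(z_k)+\delta g(z_k)u_k$ with $z_k=\tfrac12(x_{k+1}+x_k)$. (b) For any sequences $(x_k)_{k\in\mathbb{N}}\subset\mathbb{R}^n$, $(u_k)_{k\in\mathbb{N}}\subset\mathbb{R}^m$ satisfying $$x_{k+1}=x_k+\delta f(z_k)+\delta g(z_k)u_k,\qquad z_k:=\tfrac12(x_{k+1}+x_k),$$ define the output $y_k:=(g^\star)^\top Q z_k$, the equilibrium output $y^\star:=(g^\star)^\top Q x^\star$, and the errors $\tilde x_k:=x_k-x^\star$, $\tilde z_k:=z_k-x^\star$, $\tilde u_k:=u_k-u^\star$, $\tilde y_k:=y_k-y^\star$. Then for every $k\in\mathbb{N}$, $$\frac{1}{\delta}\big(H(\tilde x_{k+1})-H(\tilde x_k)\big)=-\tilde z_k^\top QRQ\,\tilde z_k+\tilde y_k^\top\tilde u_k\le \tilde y_k^\top\tilde u_k,$$ i.e. the map $\tilde u_k\mapsto\tilde y_k$ is passive with storage function $H(\tilde x_k)$ (shifted passivity).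
   Context: Power converter model: fix integers $n,m\ge1$, a symmetric positive definite matrix $Q\in\mathbb{R}^{n\times n}$, skew-symmetric matrices $J_0,J_1,\dots,J_m\in\mathbb{R}^{n\times n}$ ($J_i^\top=-J_i$), a symmetric positive semidefinite matrix $R\in\mathbb{R}^{n\times n}$, matrices $G_0,G_1,\dots,G_m\in\mathbb{R}^{n\times n}$, and a constant vector $E\in\mathbb{R}^n$. Define $H(x):=\tfrac12 x^\top Qx$, $f(x):=(J_0-R)Qx+G_0E\in\mathbb{R}^n$, and $g(x)\in\mathbb{R}^{n\times m}$ as the matrix whose $i$-th column is $J_iQx+G_iE$, $i=1,\dots,m$. The continuous-time model is $\dot x=f(x)+g(x)u$; its midpoint (implicit midpoint rule) discretization with sampling time $\delta>0$ is $x_{k+1}=x_k+\delta f(z_k)+\delta g(z_k)u_k$ with $z_k=\tfrac12(x_{k+1}+x_k)$. *)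

theory Defs
  imports "HOL-Analysis.Analysis"
begin

definition sym_mat :: "real^'n^'n \<Rightarrow> bool" where
  "sym_mat A \<longleftrightarrow> transpose A = A"

definition skew_mat :: "real^'n^'n \<Rightarrow> bool" where
  "skew_mat A \<longleftrightarrow> transpose A = - A"

definition pos_def_mat :: "real^'n^'n \<Rightarrow> bool" where
  "pos_def_mat A \<longleftrightarrow> sym_mat A \<and> (\<forall>x. x \<noteq> 0 \<longrightarrow> x \<bullet> (A *v x) > 0)"

definition pos_semidef_mat :: "real^'n^'n \<Rightarrow> bool" where
  "pos_semidef_mat A \<longleftrightarrow> sym_mat A \<and> (\<forall>x. x \<bullet> (A *v x) \<ge> 0)"

definition ham :: "real^'n^'n \<Rightarrow> real^'n \<Rightarrow> real" where
  "ham Q x = (1/2) * (x \<bullet> (Q *v x))"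

definition drift :: "real^'n^'n \<Rightarrow> real^'n^'n \<Rightarrow> real^'n^'n \<Rightarrow> real^'n^'n \<Rightarrow> real^'n
   \<Rightarrow> real^'n \<Rightarrow> real^'n" where
  "drift Q J0 R G0 E x = (J0 - R) *v (Q *v x) + G0 *v E"

definition inmat :: "real^'n^'n \<Rightarrow> ('m \<Rightarrow> real^'n^'n) \<Rightarrow> ('m \<Rightarrow> real^'n^'n) \<Rightarrow> real^'n
   \<Rightarrow> real^'n \<Rightarrow> real^'m^'n" where
  "inmat Q J G E x = (\<chi> r c. (J c *v (Q *v x) + G c *v E) $ r)"

end

theory Submission
  imports Defs
begin

lemma neg_mv: "(- A) *v x = - (A *v (x::real^'n))"
  by (simp add: matrix_vector_mult_def vec_eq_iff sum_negf)
lemma sym_inner: assumes "transpose A = A" shows "x \<bullet> (A *v y) = (A *v x) \<bullet> (y::real^'n)"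
proof -
  have "x \<bullet> (A *v y) = (x v* A) \<bullet> y" by (rule dot_lmul_matrix[symmetric])
  also have "x v* A = transpose A *v x" by (rule transpose_matrix_vector[symmetric])
  also have "transpose A = A" by (rule assms)
  finally show ?thesis .
qed
lemma skew_inner: fixes x :: "real^'n" assumes "transpose A = - A" shows "x \<bullet> (A *v x) = (0::real)"
proof -
  have "x \<bullet> (A *v x) = (x v* A) \<bullet> x" by (rule dot_lmul_matrix[symmetric])
  also have "x v* A = transpose A *v x" by (rule transpose_matrix_vector[symmetric])
  also have "transpose A = - A" by (rule assms)
  also have "(- A) *v x = - (A *v x)" by (rule neg_mv)
  also have "(- (A *v x)) \<bullet> x = - (x \<bullet> (A *v x))" by (simp only: inner_minus_left inner_minus_right inner_commute)
  finally show ?thesis by simp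
qed

lemma main_step:
  fixes Q R J0 G0 :: "real^'n^'n"
    and J G :: "'m::finite \<Rightarrow> real^'n^'n"
    and E xs a b z :: "real^'n"
    and us v :: "real^'m"
    and \<delta> :: real
  assumes symQ: "transpose Q = Q"
    and psdR: "\<And>y. y \<bullet> (R *v y) \<ge> 0"
    and J0: "transpose J0 = - J0"
    and J: "\<And>i. transpose (J i) = - J i"
    and \<delta>: "\<delta> > 0"
    and eq: "drift Q J0 R G0 E xs + inmat Q J G E xs *v us = 0"
    and hb: "b = a + \<delta> *\<^sub>R drift Q J0 R G0 E z + \<delta> *\<^sub>R (inmat Q J G E z *v v)"
    and hz: "z = (1/2) *\<^sub>R (b + a)"
  shows "(1/\<delta>) * (ham Q (b - xs) - ham Q (a - xs))
     = - ((z - xs) \<bullet> ((Q ** R ** Q) *v (z - xs)))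
       + (transpose (inmat Q J G E xs) *v (Q *v z) - transpose (inmat Q J G E xs) *v (Q *v xs)) \<bullet> (v - us)"
    and "(z - xs) \<bullet> ((Q ** R ** Q) *v (z - xs)) \<ge> 0"
proof -
  define zt where "zt = z - xs"
  define w where "w = Q *v zt"
  define p where "p = b - xs"
  define q where "q = a - xs"
  define gs where "gs = inmat Q J G E xs"
  have ztpq: "zt = (1/2) *\<^sub>R (p + q)"
  proof -
    have e: "p + q = (b + a) - 2 *\<^sub>R xs" unfolding p_def q_def
      by (simp add: scaleR_2 algebra_simps)
    show ?thesis unfolding e zt_def hz by (simp add: scaleR_diff_right)
  qed
  have wpq: "w = (1/2) *\<^sub>R (Q *v p + Q *v q)"
    unfolding w_def ztpq by (simp add: matrix_vector_mult_scaleR matrix_vector_right_distrib)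
  have pq: "p \<bullet> (Q *v q) = q \<bullet> (Q *v p)"
    using sym_inner[OF symQ, of p q] by (simp add: inner_commute)
  have h1: "ham Q (b - xs) - ham Q (a - xs) = (b - a) \<bullet> w"
  proof -
    have "ham Q (b - xs) - ham Q (a - xs) = ham Q p - ham Q q" by (simp add: p_def q_def)
    also have "\<dots> = (p - q) \<bullet> w" unfolding ham_def wpq
      by (auto simp: inner_diff_left inner_add_right pq)
    also have "p - q = b - a" unfolding p_def q_def by simp
    finally show ?thesis .
  qed
  have h2: "b - a = \<delta> *\<^sub>R ((drift Q J0 R G0 E z - drift Q J0 R G0 E xs)
        + (inmat Q J G E z *v v - inmat Q J G E xs *v us))"
  proof -
    have "b - a = \<delta> *\<^sub>R (drift Q J0 R G0 E z + inmat Q J G E z *v v)"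
      using hb by (simp add: scaleR_add_right)
    also have "\<dots> = \<delta> *\<^sub>R (drift Q J0 R G0 E z + inmat Q J G E z *v v
         - (drift Q J0 R G0 E xs + inmat Q J G E xs *v us))" using eq by simp
    finally show ?thesis by (simp only: add_diff_add)
  qed
  have h3: "drift Q J0 R G0 E z - drift Q J0 R G0 E xs = (J0 - R) *v w"
    unfolding drift_def w_def zt_def by (simp add: matrix_vector_mult_diff_distrib)
  define X where "X = (\<chi> r. \<Sum>c\<in>UNIV. (J c *v w) $ r * v $ c)"
  have h4a: "inmat Q J G E z *v v - inmat Q J G E xs *v v = X"
  proof -
    have c: "\<And>c. J c *v (Q *v z) - J c *v (Q *v xs) = J c *v w"
      unfolding w_def zt_def by (simp add: matrix_vector_mult_diff_distrib)
    have c': "\<And>c r. (J c *v (Q *v z)) $ r - (J c *v (Q *v xs)) $ r = (J c *v w) $ r"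
      by (simp only: vector_minus_component[symmetric] c)
    have comp: "\<And>(A::real^'m^'n) r. (A *v v) $ r = (\<Sum>c\<in>UNIV. A$r$c * v$c)"
      by (simp add: matrix_vector_mult_def)
    have ic: "\<And>x r c. inmat Q J G E x $ r $ c = (J c *v (Q *v x)) $ r + (G c *v E) $ r"
      by (simp add: inmat_def)
    show ?thesis unfolding X_def vec_eq_iff
    proof
      fix r
      have "(inmat Q J G E z *v v - inmat Q J G E xs *v v) $ r
         = (\<Sum>c\<in>UNIV. ((J c *v (Q *v z)) $ r - (J c *v (Q *v xs)) $ r) * v $ c)"
        unfolding vector_minus_component comp ic sum_subtractf[symmetric]
        by (rule sum.cong) (simp_all add: algebra_simps)
      then show "(inmat Q J G E z *v v - inmat Q J G E xs *v v) $ r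
         = (\<chi> r. \<Sum>c\<in>UNIV. (J c *v w) $ r * v $ c) $ r"
        by (simp only: c' vec_lambda_beta)
    qed
  qed
  have h4: "inmat Q J G E z *v v - inmat Q J G E xs *v us = X + gs *v (v - us)"
  proof -
    have g: "gs *v (v - us) = inmat Q J G E xs *v v - inmat Q J G E xs *v us"
      unfolding gs_def by (rule matrix_vector_mult_diff_distrib)
    have "inmat Q J G E z *v v - inmat Q J G E xs *v us
      = (inmat Q J G E z *v v - inmat Q J G E xs *v v) + (inmat Q J G E xs *v v - inmat Q J G E xs *v us)"
      by simp
    then show ?thesis unfolding h4a g .
  qed
  have h5: "w \<bullet> X = 0"
  proof -
    have "w \<bullet> X = (\<Sum>r\<in>UNIV. w $ r * (\<Sum>c\<in>UNIV. (J c *v w) $ r * v $ c))"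
      unfolding X_def inner_vec_def by simp
    also have "\<dots> = (\<Sum>r\<in>UNIV. \<Sum>c\<in>UNIV. v $ c * (w $ r * (J c *v w) $ r))"
      unfolding sum_distrib_left by (simp add: mult_ac)
    also have "\<dots> = (\<Sum>c\<in>UNIV. \<Sum>r\<in>UNIV. v $ c * (w $ r * (J c *v w) $ r))"
      by (rule sum.swap)
    also have "\<dots> = (\<Sum>c\<in>UNIV. v $ c * (\<Sum>r\<in>UNIV. w $ r * (J c *v w) $ r))"
      by (simp only: sum_distrib_left)
    also have "\<dots> = (\<Sum>c\<in>UNIV. v $ c * (w \<bullet> (J c *v w)))"
      by (simp add: inner_vec_def)
    also have "\<dots> = 0" using skew_inner[OF J] by simp
    finally show ?thesis .
  qed
  have h6: "w \<bullet> ((J0 - R) *v w) = - (w \<bullet> (R *v w))"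
    using skew_inner[OF J0, of w] by (simp add: matrix_vector_mult_diff_rdistrib inner_diff_right)
  have h7: "zt \<bullet> ((Q ** R ** Q) *v zt) = w \<bullet> (R *v w)"
  proof -
    have "(Q ** R ** Q) *v zt = Q *v (R *v w)"
      unfolding w_def by (simp add: matrix_vector_mul_assoc matrix_mul_assoc)
    moreover have "zt \<bullet> (Q *v (R *v w)) = w \<bullet> (R *v w)"
      unfolding w_def by (rule sym_inner[OF symQ])
    ultimately show ?thesis by (simp only:)
  qed
  have h8: "w \<bullet> (gs *v (v - us)) = (transpose gs *v w) \<bullet> (v - us)"
    by (simp only: transpose_matrix_vector dot_lmul_matrix)
  have h9: "transpose gs *v (Q *v z) - transpose gs *v (Q *v xs) = transpose gs *v w"
    unfolding w_def zt_def by (simp only: matrix_vector_mult_diff_distrib)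
  have "(1/\<delta>) * (ham Q (b - xs) - ham Q (a - xs))
     = ((J0 - R) *v w + X + gs *v (v - us)) \<bullet> w"
    using \<delta> unfolding h1 h2 h3 h4 inner_scaleR_left by (simp add: add.assoc)
  also have "\<dots> = w \<bullet> ((J0 - R) *v w + X + gs *v (v - us))"
    by (rule inner_commute)
  also have "\<dots> = w \<bullet> ((J0 - R) *v w) + w \<bullet> X + w \<bullet> (gs *v (v - us))"
    by (simp only: inner_add_right)
  also have "\<dots> = - (zt \<bullet> ((Q ** R ** Q) *v zt)) + (transpose gs *v w) \<bullet> (v - us)"
    unfolding h5 h6 h7 h8 by simp
  finally have F: "(1/\<delta>) * (ham Q (b - xs) - ham Q (a - xs))
     = - (zt \<bullet> ((Q ** R ** Q) *v zt)) + (transpose gs *v w) \<bullet> (v - us)" .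
  show "(1/\<delta>) * (ham Q (b - xs) - ham Q (a - xs))
     = - ((z - xs) \<bullet> ((Q ** R ** Q) *v (z - xs)))
       + (transpose (inmat Q J G E xs) *v (Q *v z) - transpose (inmat Q J G E xs) *v (Q *v xs)) \<bullet> (v - us)"
    unfolding zt_def[symmetric] gs_def[symmetric] h9 by (rule F)
  show "(z - xs) \<bullet> ((Q ** R ** Q) *v (z - xs)) \<ge> 0"
    unfolding zt_def[symmetric] h7 by (rule psdR)
qed



theorem proposition2:
  fixes Q R J0 G0 :: "real^'n^'n"
    and J G :: "'m::finite \<Rightarrow> real^'n^'n"
    and E xs :: "real^'n"
    and us :: "real^'m"
    and \<delta> :: real
  assumes Q: "pos_def_mat Q"
    and J0: "skew_mat J0"
    and J: "\<And>i. skew_mat (J i)"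
    and R: "pos_semidef_mat R"
    and \<delta>: "\<delta> > 0"
    and eq: "drift Q J0 R G0 E xs + inmat Q J G E xs *v us = 0"
  shows
    "(let z = (1/2) *\<^sub>R (xs + xs) in
        xs = xs + \<delta> *\<^sub>R drift Q J0 R G0 E z + \<delta> *\<^sub>R (inmat Q J G E z *v us))
     \<and> (\<forall>(x :: nat \<Rightarrow> real^'n) (u :: nat \<Rightarrow> real^'m).
          (\<forall>k. x (Suc k) = x k
                 + \<delta> *\<^sub>R drift Q J0 R G0 E ((1/2) *\<^sub>R (x (Suc k) + x k))
                 + \<delta> *\<^sub>R (inmat Q J G E ((1/2) *\<^sub>R (x (Suc k) + x k)) *v u k))
          \<longrightarrow> (\<forall>k. let gs = inmat Q J G E xs;
                     z = (1/2) *\<^sub>R (x (Suc k) + x k);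
                     y = transpose gs *v (Q *v z);
                     ys = transpose gs *v (Q *v xs);
                     xt = x k - xs; xt' = x (Suc k) - xs;
                     zt = z - xs; ut = u k - us; yt = y - ys
                 in (1/\<delta>) * (ham Q xt' - ham Q xt)
                      = - (zt \<bullet> ((Q ** R ** Q) *v zt)) + yt \<bullet> ut
                    \<and> - (zt \<bullet> ((Q ** R ** Q) *v zt)) + yt \<bullet> ut \<le> yt \<bullet> ut))"
  proof -
  have symQ: "transpose Q = Q" using Q unfolding pos_def_mat_def sym_mat_def by simp
  have psdR: "\<And>y. y \<bullet> (R *v y) \<ge> 0" using R unfolding pos_semidef_mat_def by simp
  have J0': "transpose J0 = - J0" using J0 unfolding skew_mat_def .
  have J': "\<And>i. transpose (J i) = - J i" using J unfolding skew_mat_def by simp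
  have hx: "(1/2) *\<^sub>R (xs + xs) = xs" by (simp add: scaleR_2[symmetric])
  have A: "let z = (1/2) *\<^sub>R (xs + xs) in
        xs = xs + \<delta> *\<^sub>R drift Q J0 R G0 E z + \<delta> *\<^sub>R (inmat Q J G E z *v us)"
    unfolding Let_def hx using eq by (simp add: add.assoc scaleR_add_right[symmetric])
  show ?thesis
  proof (intro conjI A allI impI)
    fix x :: "nat \<Rightarrow> real^'n" and u :: "nat \<Rightarrow> real^'m" and k :: nat
    assume st: "\<forall>k. x (Suc k) = x k
                 + \<delta> *\<^sub>R drift Q J0 R G0 E ((1/2) *\<^sub>R (x (Suc k) + x k))
                 + \<delta> *\<^sub>R (inmat Q J G E ((1/2) *\<^sub>R (x (Suc k) + x k)) *v u k)"
    note M = main_step[OF symQ psdR J0' J' \<delta> eq st[rule_format, of k] refl]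
    show "let gs = inmat Q J G E xs;
                     z = (1/2) *\<^sub>R (x (Suc k) + x k);
                     y = transpose gs *v (Q *v z);
                     ys = transpose gs *v (Q *v xs);
                     xt = x k - xs; xt' = x (Suc k) - xs;
                     zt = z - xs; ut = u k - us; yt = y - ys
                 in (1/\<delta>) * (ham Q xt' - ham Q xt)
                      = - (zt \<bullet> ((Q ** R ** Q) *v zt)) + yt \<bullet> ut
                    \<and> - (zt \<bullet> ((Q ** R ** Q) *v zt)) + yt \<bullet> ut \<le> yt \<bullet> ut"
      unfolding Let_def
    proof (intro conjI)
      show "(1/\<delta>) * (ham Q (x (Suc k) - xs) - ham Q (x k - xs))
        = - (((1/2) *\<^sub>R (x (Suc k) + x k) - xs) \<bullet> ((Q ** R ** Q) *v ((1/2) *\<^sub>R (x (Suc k) + x k) - xs)))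
          + (transpose (inmat Q J G E xs) *v (Q *v ((1/2) *\<^sub>R (x (Suc k) + x k)))
             - transpose (inmat Q J G E xs) *v (Q *v xs)) \<bullet> (u k - us)"
        by (rule M(1))
      show "- (((1/2) *\<^sub>R (x (Suc k) + x k) - xs) \<bullet> ((Q ** R ** Q) *v ((1/2) *\<^sub>R (x (Suc k) + x k) - xs)))
          + (transpose (inmat Q J G E xs) *v (Q *v ((1/2) *\<^sub>R (x (Suc k) + x k)))
             - transpose (inmat Q J G E xs) *v (Q *v xs)) \<bullet> (u k - us)
        \<le> (transpose (inmat Q J G E xs) *v (Q *v ((1/2) *\<^sub>R (x (Suc k) + x k)))
             - transpose (inmat Q J G E xs) *v (Q *v xs)) \<bullet> (u k - us)"
        using M(2) by linarith
    qed
  qed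
qed

end
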